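(* The $\Re$-module $R_d(a,b,c)$ is isomorphic to $R_d(-a-1,b,c)$. Moreover, setting $w_i=\prod_{h=0}^{i-1}(A-\theta_{d-h})v_0$ for $0\le i\le d$, the vectors $w_0,\dots,w_d$ form a basis of $R_d(a,b,c)$ with $Aw_i=\theta_{d-i}w_i+w_{i+1}$ (with $w_{d+1}=0$) and $Bw_i=\theta_i^*w_i+\phi_iw_{i-1}$ (with $w_{-1}=0$) for $0\le i\le d$, where $\phi_i=i(i-d-1)(a-b+c-\tfrac d2+i)(a-b-c-\tfrac d2+i-1)$.
   Context: $\mathbb F$ is algebraically closed with $\operatorname{char}\mathbb F\ne2$. The Racah algebra $\Re$ is the unital associative $\mathbb F$-algebra with generators $A,B,C,D$ and relations $[A,B]=[B,C]=[C,A]=2D$ together with the requirement that each of $\alpha:=[A,D]+AC-BA$, $\beta:=[B,D]+BA-CB$, $\gamma:=[C,D]+CB-AC$ is central in $\Re$; $\delta:=A+B+C$. For $a,b,c\in\mathbb F$ and $d\in\mathbb N$ set $\theta_i=(a+\tfrac d2-i)(a+\tfrac d2-i+1)$, $\theta_i^*=(b+\tfrac d2-i)(b+\tfrac d2-i+1)$, $\varphi_i=i(i-d-1)(a+b+c+\tfrac d2-i+2)(a+b-c+\tfrac d2-i+1)$. $R_d(a,b,c)$ denotes the $(d+1)$-dimensional $\Re$-module with a basis $v_0,\dots,v_d$ such that $Av_i=\theta_iv_i+v_{i+1}$ ($v_{d+1}=0$), $Bv_i=\theta_i^*v_i+\varphi_iv_{i-1}$ ($v_{-1}=0$), and $\alpha,\beta,\delta$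 act as the scalars $(c-b)(c+b+1)(a-\tfrac d2)(a+\tfrac d2+1)$, $(a-c)(a+c+1)(b-\tfrac d2)(b+\tfrac d2+1)$, $\tfrac d2(\tfrac d2+1)+a(a+1)+b(b+1)+c(c+1)$ respectively (exists, unique up to isomorphism). *)

theory Defs
  imports "HOL-Computational_Algebra.Polynomial" "Jordan_Normal_Form.Matrix"
begin

text \<open>Concrete model of the Racah algebra module R_d(a,b,c) on F^(d+1), basis v_i = unit_vec (d+1) i.
  The generators A,B,C,D act by the matrices below: C = delta - A - B and D = [A,B]/2,
  as forced by delta = A+B+C and [A,B] = 2D.\<close>

definition rtheta :: "'a::field \<Rightarrow> nat \<Rightarrow> nat \<Rightarrow> 'a" where
  "rtheta a d i = (a + of_nat d / 2 - of_nat i) * (a + of_nat d / 2 - of_nat i + 1)"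

definition rphi :: "'a::field \<Rightarrow> 'a \<Rightarrow> 'a \<Rightarrow> nat \<Rightarrow> nat \<Rightarrow> 'a" where
  "rphi a b c d i = of_nat i * (of_nat i - of_nat d - 1)
      * (a + b + c + of_nat d / 2 - of_nat i + 2) * (a + b - c + of_nat d / 2 - of_nat i + 1)"

definition rdelta :: "'a::field \<Rightarrow> 'a \<Rightarrow> 'a \<Rightarrow> nat \<Rightarrow> 'a" where
  "rdelta a b c d = (of_nat d / 2) * (of_nat d / 2 + 1) + a * (a + 1) + b * (b + 1) + c * (c + 1)"

definition RA :: "'a::field \<Rightarrow> 'a \<Rightarrow> 'a \<Rightarrow> nat \<Rightarrow> 'a mat" where
  "RA a b c d = mat (d+1) (d+1)
     (\<lambda>(i,j). if i = j then rtheta a d j else if i = j + 1 then 1 else 0)"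

definition RB :: "'a::field \<Rightarrow> 'a \<Rightarrow> 'a \<Rightarrow> nat \<Rightarrow> 'a mat" where
  "RB a b c d = mat (d+1) (d+1)
     (\<lambda>(i,j). if i = j then rtheta b d j else if j = i + 1 then rphi a b c d j else 0)"

definition RC :: "'a::field \<Rightarrow> 'a \<Rightarrow> 'a \<Rightarrow> nat \<Rightarrow> 'a mat" where
  "RC a b c d = rdelta a b c d \<cdot>\<^sub>m 1\<^sub>m (d+1) - RA a b c d - RB a b c d"

definition RD :: "'a::field \<Rightarrow> 'a \<Rightarrow> 'a \<Rightarrow> nat \<Rightarrow> 'a mat" where
  "RD a b c d = (1/2) \<cdot>\<^sub>m (RA a b c d * RB a b c d - RB a b c d * RA a b c d)"

definition racah_iso :: "nat \<Rightarrow> 'a::field \<Rightarrow> 'a \<Rightarrow> 'a \<Rightarrow> 'a \<Rightarrow> 'a \<Rightarrow> 'a \<Rightarrow> bool" where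
  "racah_iso d a b c a' b' c' \<longleftrightarrow>
     (\<exists>P \<in> carrier_mat (d+1) (d+1). invertible_mat P \<and>
        P * RA a b c d = RA a' b' c' d * P \<and>
        P * RB a b c d = RB a' b' c' d * P \<and>
        P * RC a b c d = RC a' b' c' d * P \<and>
        P * RD a b c d = RD a' b' c' d * P)"

fun wvec :: "'a::field \<Rightarrow> 'a \<Rightarrow> 'a \<Rightarrow> nat \<Rightarrow> nat \<Rightarrow> 'a vec" where
  "wvec a b c d 0 = unit_vec (d+1) 0"
| "wvec a b c d (Suc i) =
     (RA a b c d - rtheta a d (d - i) \<cdot>\<^sub>m 1\<^sub>m (d+1)) *\<^sub>v wvec a b c d i"

definition rphi' :: "'a::field \<Rightarrow> 'a \<Rightarrow> 'a \<Rightarrow> nat \<Rightarrow> nat \<Rightarrow> 'a" where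
  "rphi' a b c d i = of_nat i * (of_nat i - of_nat d - 1)
      * (a - b + c - of_nat d / 2 + of_nat i) * (a - b - c - of_nat d / 2 + of_nat i - 1)"

end

theory Submission imports Defs "Jordan_Normal_Form.Determinant" begin

definition FF :: "'a::field \<Rightarrow> nat \<Rightarrow> nat \<Rightarrow> 'a" where
  "FF D j m = (\<Prod>l<m. (D - of_nat j - of_nat l))"
definition RR :: "'a::field \<Rightarrow> nat \<Rightarrow> 'a" where
  "RR a m = (\<Prod>l<m. (2*a + 1 + of_nat l))"
definition cc :: "'a::field \<Rightarrow> nat \<Rightarrow> nat \<Rightarrow> nat \<Rightarrow> 'a" where
  "cc a d i j = of_nat (i choose j) * FF (of_nat d) j (i - j) * RR a (i - j)"

lemma FF_Suc: "FF D j (Suc m) = FF D j m * (D - of_nat j - of_nat m)"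
  by (simp add: FF_def)
lemma FF_shift: "FF D j (Suc m) = (D - of_nat j) * FF D (Suc j) m"
  unfolding FF_def prod.lessThan_Suc_shift by (simp add: algebra_simps)
lemma RR_Suc: "RR a (Suc m) = RR a m * (2*a + 1 + of_nat m)"
  by (simp add: RR_def)

lemma cc_zero: "i < j \<Longrightarrow> cc a d i j = 0" by (simp add: cc_def binomial_eq_0)
lemma cc_diag: "cc a d i i = 1" by (simp add: cc_def FF_def RR_def)

lemma theta_diff:
  assumes two: "(2::'a::field) \<noteq> 0" and "i \<le> d"
  shows "rtheta (a::'a) d j - rtheta a d (d - i) = (of_nat d - of_nat i - of_nat j) * (2*a + 1 + of_nat i - of_nat j)"
proof -
  define h where "h = (of_nat d / 2 :: 'a)"
  have h2: "of_nat d = 2 * h" using two by (simp add: h_def)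
  show ?thesis unfolding rtheta_def of_nat_diff[OF assms(2)] unfolding h_def[symmetric] unfolding h2 by (simp add: algebra_simps)
qed

lemma c_rec:
  assumes two: "(2::'a::field) \<noteq> 0" and id: "i \<le> d"
  shows "cc (a::'a) d (Suc i) j = (rtheta a d j - rtheta a d (d - i)) * cc a d i j + (if 0 < j then cc a d i (j - 1) else 0)"
proof (cases "Suc i < j")
  case True thus ?thesis by (simp add: cc_zero)
next
  case False
  show ?thesis
  proof (cases "j = Suc i")
    case True thus ?thesis by (simp add: cc_diag cc_zero)
  next
    case False
    with \<open>\<not> Suc i < j\<close> obtain m where im: "i = j + m" by (metis add_diff_inverse_nat less_Suc_eq not_less_eq)
    note td = theta_diff[OF two id, of a j]
    show ?thesis
    proof (cases j)
      case 0
      thus ?thesis unfolding td using im by (simp add: cc_def FF_Suc RR_Suc algebra_simps)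
    next
      case (Suc j')
      have b1: "of_nat (Suc i choose j) = (of_nat (i choose j) + of_nat (i choose j') :: 'a)"
        using Suc by simp
      have b2: "of_nat j * (of_nat (i choose j) :: 'a) = (of_nat m + 1) * of_nat (i choose j')"
      proof -
        have b2n: "j * (i choose j) = Suc m * (i choose j')" using Suc_times_binomial_add[of j' m] Suc im by simp
        show ?thesis using arg_cong[OF b2n, of "of_nat::nat\<Rightarrow>'a"] by (simp add: algebra_simps)
      qed
      have e1: "Suc i - j = Suc m" "i - j = m" "i - j' = Suc m" using im Suc by auto
      define C where "C = (of_nat (i choose j) :: 'a)"
      define C' where "C' = (of_nat (i choose j') :: 'a)"
      define F where "F = FF (of_nat d :: 'a) j m"
      define R where "R = RR a m"
      define D where "D = (of_nat d :: 'a)"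
      define J where "J = (of_nat j :: 'a)"
      define M where "M = (of_nat m :: 'a)"
      have I: "of_nat i = J + M" unfolding J_def M_def im by simp
      have J': "of_nat j' = J - 1" unfolding J_def Suc by simp
      have h1: "cc a d (Suc i) j = (C + C') * F * (D - J - M) * R * (2*a+1+M)"
        unfolding cc_def e1 b1 FF_Suc RR_Suc C_def C'_def F_def R_def D_def J_def M_def by (simp add: algebra_simps)
      have h2: "cc a d i (j - 1) = C' * (D - J + 1) * F * R * (2*a+1+M)"
        unfolding cc_def using Suc e1 by (simp add: FF_shift RR_Suc C'_def F_def R_def D_def J_def M_def algebra_simps)
      have h3: "cc a d i j = C * F * R" unfolding cc_def e1 C_def F_def R_def ..
      have b2': "J * C = (M + 1) * C'" using b2 unfolding J_def C_def M_def C'_def .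
      have key0: "(C + C')*(D-J-M) = (D-(J+M)-J)*C + C'*(D-J+1) + (J*C - (M+1)*C')" by (simp add: algebra_simps)
      have key: "(C + C')*(D-J-M) = (D-(J+M)-J)*C + C'*(D-J+1)" using key0 b2' by simp
      have "cc a d (Suc i) j = F * R * (2*a+1+M) * ((C + C')*(D-J-M))" unfolding h1 by (simp add: algebra_simps)
      also have "\<dots> = F * R * (2*a+1+M) * ((D-(J+M)-J)*C + C'*(D-J+1))" unfolding key ..
      also have "\<dots> = (D - of_nat i - J) * (2*a + 1 + of_nat i - J) * (C*F*R) + C' * (D - J + 1) * F * R * (2*a+1+M)"
        unfolding I by (simp add: algebra_simps)
      finally show ?thesis unfolding td h2 h3 using Suc by (simp add: D_def J_def)
    qed
  qed
qed
lemma thetab_diff: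
  assumes two: "(2::'a::field) \<noteq> 0"
  shows "rtheta (b::'a) d k - rtheta b d i = (of_nat i - of_nat k) * (2*b + of_nat d + 1 - of_nat k - of_nat i)"
proof -
  define h where "h = (of_nat d / 2 :: 'a)"
  have h2: "of_nat d = 2 * h" using two by (simp add: h_def)
  show ?thesis unfolding rtheta_def unfolding h_def[symmetric] unfolding h2 by (simp add: algebra_simps)
qed

lemma scalar_B:
  assumes two: "(2::'a::field) \<noteq> 0"
  shows "(2*b + D + 1 - K - I) * (2*a + 1 + (I - K - 1)) - (a+b+c+D/2-K+1)*(a+b-c+D/2-K)
     + (a-b+c-D/2+I)*(a-b-c-D/2+I-1) = (0::'a)"
proof -
  define h where "h = D / 2"
  have h2: "D = 2 * h" using two by (simp add: h_def)
  show ?thesis unfolding h_def[symmetric] unfolding h2 by (simp add: algebra_simps)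
qed

lemma c_B:
  assumes two: "(2::'a::field) \<noteq> 0" 
  shows "rtheta b d k * cc (a::'a) d i k + rphi a b c d (Suc k) * cc a d i (Suc k)
    = rtheta b d i * cc a d i k + (if 0 < i then rphi' a b c d i * cc a d (i - 1) k else 0)"
proof (cases "i < k")
  case True thus ?thesis by (simp add: cc_zero)
next
  case False
  show ?thesis
  proof (cases "i = k")
    case True thus ?thesis by (simp add: cc_zero cc_diag)
  next
    case False
    with \<open>\<not> i < k\<close> have "k < i" by simp
    then obtain m where "i = Suc (k + m)" using less_imp_Suc_add by blast
    hence im: "i = k + Suc m" by simp
    define Cik where "Cik = (of_nat (i choose k) :: 'a)"
    define Ck1 where "Ck1 = (of_nat (i choose Suc k) :: 'a)"
    define Cm where "Cm = (of_nat ((i - 1) choose k) :: 'a)"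
    define D where "D = (of_nat d :: 'a)"
    define F where "F = FF D k m"
    define Fs where "Fs = FF D (Suc k) m"
    define R where "R = RR a m"
    define K where "K = (of_nat k :: 'a)"
    define M where "M = (of_nat m :: 'a)"
    define I where "I = (of_nat i :: 'a)"
    have IKM: "I = K + M + 1" unfolding I_def K_def M_def im by simp
    have e1: "i - k = Suc m" "i - Suc k = m" "i - 1 - k = m" using im by auto
    have r1: "(M + 1) * Cik = I * Cm"
    proof -
      have "(i - k) * (i choose k) = i * ((i - 1) choose k)" by (rule binomial_absorb_comp)
      from arg_cong[OF this, of "of_nat::nat\<Rightarrow>'a"] show ?thesis
        unfolding e1 M_def Cik_def I_def Cm_def by (simp add: algebra_simps)
    qed
    have r2: "(K + 1) * Ck1 = I * Cm"
    proof -
      have "Suc (i - 1) * ((i - 1) choose k) = (Suc (i - 1) choose Suc k) * Suc k" by (rule Suc_times_binomial_eq)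
      moreover have "Suc (i - 1) = i" using im by simp
      ultimately have "i * ((i - 1) choose k) = (i choose Suc k) * Suc k" by simp
      from arg_cong[OF this, of "of_nat::nat\<Rightarrow>'a"] show ?thesis
        unfolding K_def Ck1_def I_def Cm_def by (simp add: algebra_simps)
    qed
    have r3: "(D - K) * Fs = F * (D - K - M)"
      using FF_shift[of D k m] FF_Suc[of D k m] unfolding Fs_def F_def K_def M_def by simp
    have ck: "cc a d i k = Cik * F * (D - K - M) * R * (2*a+1+M)"
      unfolding cc_def e1 FF_Suc RR_Suc Cik_def F_def D_def K_def M_def R_def by (simp add: algebra_simps)
    have ck1: "cc a d i (Suc k) = Ck1 * Fs * R"
      unfolding cc_def e1 Ck1_def Fs_def R_def D_def by simp
    have ckm: "cc a d (i - 1) k = Cm * F * R"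
      unfolding cc_def e1 Cm_def F_def R_def D_def by simp
    define G where "G = I * Cm * F * (D - K - M) * R"
    define E1 where "E1 = 2*b + D + 1 - K - I"
    define X where "X = a+b+c+D/2-K+1"
    define Y where "Y = a+b-c+D/2-K"
    define Z where "Z = (a-b+c-D/2+I)*(a-b-c-D/2+I-1)"
    have th: "rtheta b d k - rtheta b d i = (M+1) * E1"
      unfolding thetab_diff[OF two] E1_def D_def[symmetric] I_def[symmetric] K_def[symmetric] IKM by (simp add: algebra_simps)
    have ph: "rphi a b c d (Suc k) = (K+1)*(K-D)*X*Y"
      unfolding rphi_def X_def Y_def K_def D_def by (simp add: algebra_simps)
    have ph': "rphi' a b c d i = I*(I-D-1)*Z"
      unfolding rphi'_def Z_def I_def D_def by (simp add: mult.assoc)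
    have t1: "(rtheta b d k - rtheta b d i) * cc a d i k = G * (E1*(2*a+1+M))"
    proof -
      have "(rtheta b d k - rtheta b d i) * cc a d i k = E1 * ((M+1)*Cik) * F * (D-K-M) * R * (2*a+1+M)"
        unfolding th ck by (simp add: algebra_simps)
      also have "\<dots> = G * (E1*(2*a+1+M))" unfolding r1 G_def by (simp add: algebra_simps)
      finally show ?thesis .
    qed
    have t2: "rphi a b c d (Suc k) * cc a d i (Suc k) = G * (-(X*Y))"
    proof -
      have "rphi a b c d (Suc k) * cc a d i (Suc k) = - (X*Y*((K+1)*Ck1)*((D-K)*Fs)*R)"
        unfolding ph ck1 by (simp add: algebra_simps)
      also have "\<dots> = G * (-(X*Y))" unfolding r2 r3 G_def by (simp add: algebra_simps)
      finally show ?thesis .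
    qed
    have t3: "rphi' a b c d i * cc a d (i - 1) k = G * (-Z)"
    proof -
      have "I - D - 1 = -(D - K - M)" unfolding IKM by (simp add: algebra_simps)
      then show ?thesis unfolding ph' ckm G_def by (simp add: algebra_simps)
    qed
    have sc: "E1*(2*a+1+M) + (-(X*Y)) = -Z"
      using scalar_B[OF two, of b D K I a c] unfolding E1_def X_def Y_def Z_def
      by (simp add: IKM algebra_simps)
    have "rtheta b d k * cc a d i k + rphi a b c d (Suc k) * cc a d i (Suc k)
       = rtheta b d i * cc a d i k + ((rtheta b d k - rtheta b d i) * cc a d i k + rphi a b c d (Suc k) * cc a d i (Suc k))"
      by (simp add: algebra_simps)
    also have "\<dots> = rtheta b d i * cc a d i k + G * (E1*(2*a+1+M) + (-(X*Y)))"
      unfolding t1 t2 by (simp add: algebra_simps)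
    also have "\<dots> = rtheta b d i * cc a d i k + rphi' a b c d i * cc a d (i - 1) k"
      unfolding sc t3 by simp
    finally show ?thesis using im by simp
  qed
qed

lemma RA_carrier[simp]: "RA a b c d \<in> carrier_mat (d+1) (d+1)" by (simp add: RA_def)
lemma RB_carrier[simp]: "RB a b c d \<in> carrier_mat (d+1) (d+1)" by (simp add: RB_def)
lemma RA_dims[simp]: "dim_row (RA a b c d) = d+1" "dim_col (RA a b c d) = d+1" by (simp_all add: RA_def)
lemma RB_dims[simp]: "dim_row (RB a b c d) = d+1" "dim_col (RB a b c d) = d+1" by (simp_all add: RB_def)

lemma sum_one_pt: "p < (n::nat) \<Longrightarrow> (\<And>l. l < n \<Longrightarrow> f l = (if l = p then x else 0)) \<Longrightarrow> (\<Sum>l\<in>{0..<n}. f l) = x"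
proof -
  assume p: "p < n" and f: "\<And>l. l < n \<Longrightarrow> f l = (if l = p then x else 0)"
  have "(\<Sum>l\<in>{0..<n}. f l) = (\<Sum>l\<in>{0..<n}. if l = p then x else 0)" using f by (intro sum.cong) auto
  also have "\<dots> = x" using p by simp
  finally show ?thesis .
qed

lemma sum_two_pt: "p < (n::nat) \<Longrightarrow> q < n \<Longrightarrow> (\<And>l. l < n \<Longrightarrow> f l = (if l = p then x else 0) + (if l = q then y else 0))
   \<Longrightarrow> (\<Sum>l\<in>{0..<n}. f l) = x + y"
proof -
  assume p: "p < n" and q: "q < n" and f: "\<And>l. l < n \<Longrightarrow> f l = (if l = p then x else 0) + (if l = q then y else 0)"
  have "(\<Sum>l\<in>{0..<n}. f l) = (\<Sum>l\<in>{0..<n}. if l = p then x else 0) + (\<Sum>l\<in>{0..<n}. if l = q then y else 0)"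
    using f by (simp add: sum.distrib)
  also have "\<dots> = x + y" using p q by simp
  finally show ?thesis .
qed

lemma RA_vec:
  assumes v: "v \<in> carrier_vec (d+1)" and j: "j \<le> d"
  shows "(RA a b c d *\<^sub>v v) $ j = rtheta a d j * v $ j + (if 0 < j then v $ (j - 1) else 0)"
proof -
  have "(RA a b c d *\<^sub>v v) $ j = (\<Sum>l\<in>{0..<d+1}. RA a b c d $$ (j,l) * v $ l)"
    using v j by (simp add: scalar_prod_def)
  also have "\<dots> = rtheta a d j * v $ j + (if 0 < j then v $ (j - 1) else 0)"
  proof (cases j)
    case 0 thus ?thesis by (intro sum_one_pt[where p=j]) (auto simp: RA_def)
  next
    case (Suc j') thus ?thesis using j by (intro sum_two_pt[where p=j and q=j']) (auto simp: RA_def)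
  qed
  finally show ?thesis .
qed

lemma RB_vec:
  assumes v: "v \<in> carrier_vec (d+1)" and j: "j \<le> d"
  shows "(RB a b c d *\<^sub>v v) $ j = rtheta b d j * v $ j + (if j < d then rphi a b c d (Suc j) * v $ (Suc j) else 0)"
proof -
  have "(RB a b c d *\<^sub>v v) $ j = (\<Sum>l\<in>{0..<d+1}. RB a b c d $$ (j,l) * v $ l)"
    using v j by (simp add: scalar_prod_def)
  also have "\<dots> = rtheta b d j * v $ j + (if j < d then rphi a b c d (Suc j) * v $ (Suc j) else 0)"
  proof (cases "j < d")
    case False thus ?thesis using j by (intro sum_one_pt[where p=j]) (auto simp: RB_def)
  next
    case True thus ?thesis using j by (intro sum_two_pt[where p=j and q="Suc j"]) (auto simp: RB_def)
  qed
  finally show ?thesis .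
qed

lemma cc_top: "j \<le> d \<Longrightarrow> cc a d (Suc d) j = 0"
proof -
  assume j: "j \<le> d"
  then obtain m where m: "d = j + m" using le_Suc_ex by blast
  have "Suc d - j = Suc m" using m by simp
  thus ?thesis unfolding cc_def using m by (simp add: FF_Suc)
qed

lemma smult_one_mat_vec:
  assumes v: "v \<in> carrier_vec n" shows "((k::'a::field) \<cdot>\<^sub>m 1\<^sub>m n) *\<^sub>v v = k \<cdot>\<^sub>v v"
proof (rule eq_vecI)
  fix i assume "i < dim_vec (k \<cdot>\<^sub>v v)"
  hence i: "i < n" using v by simp
  have "((k \<cdot>\<^sub>m 1\<^sub>m n) *\<^sub>v v) $ i = (\<Sum>l\<in>{0..<n}. k * (if l = i then 1 else 0) * v $ l)"
    using i v by (simp add: scalar_prod_def)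
  also have "\<dots> = k * v $ i" using i by (intro sum_one_pt[where p=i]) auto
  finally show "((k \<cdot>\<^sub>m 1\<^sub>m n) *\<^sub>v v) $ i = (k \<cdot>\<^sub>v v) $ i" using i v by simp
qed (use v in simp)

lemma wvec_cc:
  assumes two: "(2::'a::field) \<noteq> 0"
  shows "i \<le> Suc d \<Longrightarrow> wvec (a::'a) b c d i = vec (d+1) (\<lambda>j. cc a d i j)"
proof (induction i)
  case 0
  show ?case by (rule eq_vecI) (auto simp: cc_def unit_vec_def binomial_eq_0 FF_def RR_def)
next
  case (Suc i)
  hence id: "i \<le> d" by simp
  have IH: "wvec a b c d i = vec (d+1) (\<lambda>j. cc a d i j)" using Suc by simp
  have v: "vec (d+1) (\<lambda>j. cc a d i j) \<in> carrier_vec (d+1)" by simp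
  show ?case
  proof (rule eq_vecI)
    fix j assume "j < dim_vec (vec (d+1) (\<lambda>j. cc a d (Suc i) j))"
    hence j: "j \<le> d" by simp
    have "wvec a b c d (Suc i) = RA a b c d *\<^sub>v vec (d+1) (\<lambda>j. cc a d i j)
        - rtheta a d (d - i) \<cdot>\<^sub>v vec (d+1) (\<lambda>j. cc a d i j)"
      unfolding wvec.simps IH 
      by (subst minus_mult_distrib_mat_vec[OF RA_carrier _ v], simp, subst smult_one_mat_vec[OF v], rule refl)
    hence "wvec a b c d (Suc i) $ j = (RA a b c d *\<^sub>v vec (d+1) (\<lambda>j. cc a d i j)) $ j
        - rtheta a d (d - i) * cc a d i j" using j by simp
    also have "\<dots> = cc a d (Suc i) j"
      unfolding RA_vec[OF v j] c_rec[OF two id] using j by (simp add: algebra_simps)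
    finally show "wvec a b c d (Suc i) $ j = vec (d+1) (\<lambda>j. cc a d (Suc i) j) $ j" using j by simp
  qed (simp add: dim_mult_mat_vec)
qed

lemma wvec_carrier: assumes two: "(2::'a::field) \<noteq> 0" and "i \<le> Suc d"
  shows "wvec (a::'a) b c d i \<in> carrier_vec (d+1)"
  using wvec_cc[OF two assms(2)] by simp

lemma part3:
  assumes two: "(2::'a::field) \<noteq> 0" and id: "i \<le> d"
  shows "RA (a::'a) b c d *\<^sub>v wvec a b c d i
                 = rtheta a d (d - i) \<cdot>\<^sub>v wvec a b c d i
                   + (if i < d then wvec a b c d (i+1) else 0\<^sub>v (d+1))"
proof -
  have w: "wvec a b c d i = vec (d+1) (\<lambda>j. cc a d i j)" using wvec_cc[OF two] id by simp
  have w1: "wvec a b c d (i+1) = vec (d+1) (\<lambda>j. cc a d (Suc i) j)" using wvec_cc[OF two, of "Suc i" d a b c] id by (simp del: wvec.simps)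
  have v: "vec (d+1) (\<lambda>j. cc a d i j) \<in> carrier_vec (d+1)" by simp
  have e: "(if i < d then wvec a b c d (i+1) else 0\<^sub>v (d+1)) = vec (d+1) (\<lambda>j. cc a d (Suc i) j)"
  proof (cases "i < d")
    case True thus ?thesis using w1 by (simp del: wvec.simps)
  next
    case False hence "i = d" using id by simp
    thus ?thesis by (intro eq_vecI) (auto simp: cc_top)
  qed
  show ?thesis unfolding e unfolding w
  proof (rule eq_vecI)
    fix j assume "j < dim_vec (rtheta a d (d - i) \<cdot>\<^sub>v vec (d + 1) (cc a d i) + vec (d + 1) (cc a d (Suc i)))"
    hence j: "j \<le> d" by simp
    show "(RA a b c d *\<^sub>v vec (d + 1) (cc a d i)) $ j =
         (rtheta a d (d - i) \<cdot>\<^sub>v vec (d + 1) (cc a d i) + vec (d + 1) (cc a d (Suc i))) $ j"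
      using j unfolding RA_vec[OF v j] by (simp add: c_rec[OF two id] algebra_simps)
  qed simp
qed

lemma part4:
  assumes two: "(2::'a::field) \<noteq> 0" and id: "i \<le> d"
  shows "RB (a::'a) b c d *\<^sub>v wvec a b c d i
                 = rtheta b d i \<cdot>\<^sub>v wvec a b c d i
                   + (if 0 < i then rphi' a b c d i \<cdot>\<^sub>v wvec a b c d (i-1) else 0\<^sub>v (d+1))"
proof -
  have w: "wvec a b c d i = vec (d+1) (\<lambda>j. cc a d i j)" using wvec_cc[OF two] id by simp
  have v: "vec (d+1) (\<lambda>j. cc a d i j) \<in> carrier_vec (d+1)" by simp
  have e: "(if 0 < i then rphi' a b c d i \<cdot>\<^sub>v wvec a b c d (i-1) else 0\<^sub>v (d+1))
       = vec (d+1) (\<lambda>j. if 0 < i then rphi' a b c d i * cc a d (i-1) j else 0)"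
  proof (cases "0 < i")
    case True
    have "wvec a b c d (i-1) = vec (d+1) (\<lambda>j. cc a d (i-1) j)" using wvec_cc[OF two] id by simp
    thus ?thesis using True by (intro eq_vecI) auto
  next
    case False thus ?thesis by (intro eq_vecI) auto
  qed
  show ?thesis unfolding e unfolding w
  proof (rule eq_vecI)
    fix j assume "j < dim_vec (rtheta b d i \<cdot>\<^sub>v vec (d + 1) (cc a d i) + vec (d+1) (\<lambda>j. if 0 < i then rphi' a b c d i * cc a d (i-1) j else 0))"
    hence j: "j \<le> d" by simp
    have cB: "rtheta b d j * cc a d i j + rphi a b c d (Suc j) * cc a d i (Suc j)
      = rtheta b d i * cc a d i j + (if 0 < i then rphi' a b c d i * cc a d (i - 1) j else 0)"
      by (rule c_B[OF two])
    have z: "\<not> j < d \<Longrightarrow> cc a d i (Suc j) = 0" using j id by (intro cc_zero) simp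
    show "(RB a b c d *\<^sub>v vec (d + 1) (cc a d i)) $ j =
         (rtheta b d i \<cdot>\<^sub>v vec (d + 1) (cc a d i) + vec (d+1) (\<lambda>j. if 0 < i then rphi' a b c d i * cc a d (i-1) j else 0)) $ j"
      unfolding RB_vec[OF v j] using j cB z by (cases "j < d") auto
  qed simp
qed

lemma vec_col_RA:
  assumes u: "u \<in> carrier_vec (d+1)" and i: "i \<le> d"
  shows "u \<bullet> col (RA a b c d) i = u $ i * rtheta a d i + (if i < d then u $ (Suc i) else 0)"
proof -
  have "u \<bullet> col (RA a b c d) i = (\<Sum>l\<in>{0..<d+1}. u $ l * RA a b c d $$ (l,i))"
    using u i by (simp add: scalar_prod_def)
  also have "\<dots> = u $ i * rtheta a d i + (if i < d then u $ (Suc i) else 0)"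
  proof (cases "i < d")
    case False thus ?thesis using i by (intro sum_one_pt[where p=i]) (auto simp: RA_def)
  next
    case True thus ?thesis using i by (intro sum_two_pt[where p=i and q="Suc i"]) (auto simp: RA_def)
  qed
  finally show ?thesis .
qed

lemma vec_col_RB:
  assumes u: "u \<in> carrier_vec (d+1)" and i: "i \<le> d"
  shows "u \<bullet> col (RB a b c d) i = u $ i * rtheta b d i + (if 0 < i then u $ (i - 1) * rphi a b c d i else 0)"
proof -
  have "u \<bullet> col (RB a b c d) i = (\<Sum>l\<in>{0..<d+1}. u $ l * RB a b c d $$ (l,i))"
    using u i by (simp add: scalar_prod_def)
  also have "\<dots> = u $ i * rtheta b d i + (if 0 < i then u $ (i - 1) * rphi a b c d i else 0)"
  proof (cases i)
    case 0 thus ?thesis using i by (intro sum_one_pt[where p=i]) (auto simp: RB_def)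
  next
    case (Suc i') thus ?thesis using i by (intro sum_two_pt[where p=i and q=i']) (auto simp: RB_def)
  qed
  finally show ?thesis .
qed

lemma theta_neg: assumes two: "(2::'a::field) \<noteq> 0" and j: "j \<le> d"
  shows "rtheta (-(a::'a)-1) d j = rtheta a d (d - j)"
proof -
  define h where "h = (of_nat d / 2 :: 'a)"
  have h2: "of_nat d = 2 * h" using two by (simp add: h_def)
  show ?thesis unfolding rtheta_def of_nat_diff[OF j] unfolding h_def[symmetric] unfolding h2 by (simp add: algebra_simps)
qed

lemma phi_neg: "rphi (-(a::'a::field)-1) b c d i = rphi' a b c d i"
proof -
  define h where "h = (of_nat d / 2 :: 'a)"
  show ?thesis unfolding rphi_def rphi'_def h_def[symmetric] by (simp add: algebra_simps)
qed

lemma delta_neg: "rdelta (-(a::'a::field)-1) b c d = rdelta a b c d"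
  unfolding rdelta_def by (simp add: algebra_simps)

definition WW :: "'a::field \<Rightarrow> 'a \<Rightarrow> 'a \<Rightarrow> nat \<Rightarrow> 'a mat" where
  "WW a b c d = mat_of_cols (d+1) (map (wvec a b c d) [0..<d+1])"

lemma WW_carrier[simp]: "WW a b c d \<in> carrier_mat (d+1) (d+1)" "dim_row (WW a b c d) = d+1" "dim_col (WW a b c d) = d+1"
  unfolding WW_def using mat_of_cols_carrier[of "d+1" "map (wvec a b c d) [0..<d+1]"] by (simp_all del: upt_Suc)

lemma WW_col: assumes two: "(2::'a::field) \<noteq> 0" and i: "i \<le> d"
  shows "col (WW (a::'a) b c d) i = wvec a b c d i"
proof -
  have "col (WW a b c d) i = (map (wvec a b c d) [0..<d+1]) ! i" unfolding WW_def
    by (rule col_mat_of_cols) (use i wvec_carrier[OF two, of i d a b c] in \<open>auto simp del: wvec.simps upt_Suc simp: nth_map\<close>)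
  thus ?thesis using i by (simp del: wvec.simps upt_Suc add: nth_map)
qed

lemma WW_entry: assumes two: "(2::'a::field) \<noteq> 0" and i: "i \<le> d" and j: "j \<le> d"
  shows "WW (a::'a) b c d $$ (j,i) = cc a d i j"
proof -
  have "WW a b c d $$ (j,i) = col (WW a b c d) i $ j" using i j by simp
  also have "\<dots> = cc a d i j" unfolding WW_col[OF two i] using wvec_cc[OF two, of i d a b c] i j by (simp del: wvec.simps)
  finally show ?thesis .
qed

lemma WW_inv: assumes two: "(2::'a::field) \<noteq> 0"
  shows "\<exists>P \<in> carrier_mat (d+1) (d+1). P * WW (a::'a) b c d = 1\<^sub>m (d+1) \<and> WW a b c d * P = 1\<^sub>m (d+1)"
proof -
  let ?W = "WW a b c d"
  have ut: "upper_triangular ?W" unfolding upper_triangular_def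
    using WW_entry[OF two] cc_zero by fastforce
  have "diag_mat ?W = map (\<lambda>i. 1) [0..<d+1]"
    unfolding diag_mat_def using WW_entry[OF two] cc_diag by (auto intro!: map_cong)
  hence "det ?W = 1" unfolding det_upper_triangular[OF ut WW_carrier(1)]
    by (simp add: map_replicate_const)
  hence "det ?W \<noteq> 0" by simp
  from det_non_zero_imp_unit[OF WW_carrier(1) this, unfolded Units_def, of "()"]
  show ?thesis by (auto simp: ring_mat_def)
qed

lemma WW_entry': assumes two: "(2::'a::field) \<noteq> 0" and i: "i \<le> d" and j: "j \<le> d"
  shows "WW (a::'a) b c d $$ (j,i) = wvec a b c d i $ j"
proof -
  have "WW a b c d $$ (j,i) = col (WW a b c d) i $ j" using i j by simp
  thus ?thesis unfolding WW_col[OF two i] .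
qed

lemma RA_W: assumes two: "(2::'a::field) \<noteq> 0"
  shows "RA (a::'a) b c d * WW a b c d = WW a b c d * RA (-a-1) b c d"
proof (rule eq_matI)
  fix j i assume "j < dim_row (WW a b c d * RA (-a-1) b c d)" "i < dim_col (WW a b c d * RA (-a-1) b c d)"
  hence j: "j \<le> d" and i: "i \<le> d" by auto
  have wi: "wvec a b c d i \<in> carrier_vec (d+1)" using wvec_carrier[OF two, of i d] i by simp
  have wi1: "wvec a b c d (Suc i) \<in> carrier_vec (d+1)" using wvec_carrier[OF two, of "Suc i" d] i by simp
  have "(RA a b c d * WW a b c d) $$ (j,i) = (RA a b c d *\<^sub>v col (WW a b c d) i) $ j"
    using i j by simp
  also have "\<dots> = rtheta a d (d - i) * wvec a b c d i $ j + (if i < d then wvec a b c d (Suc i) $ j else 0)"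
    unfolding WW_col[OF two i] part3[OF two i] using wi wi1 j by (cases "i < d") (auto simp del: wvec.simps)
  also have "\<dots> = row (WW a b c d) j \<bullet> col (RA (-a-1) b c d) i"
    unfolding vec_col_RA[OF row_carrier_vec[OF _ WW_carrier(1)] i, OF le_imp_less_Suc[OF j, unfolded Suc_eq_plus1]]
    using i j by (simp add: WW_entry'[OF two] theta_neg[OF two] del: wvec.simps)
  also have "\<dots> = (WW a b c d * RA (-a-1) b c d) $$ (j,i)" using i j by simp
  finally show "(RA a b c d * WW a b c d) $$ (j,i) = (WW a b c d * RA (-a-1) b c d) $$ (j,i)" .
qed auto

lemma RB_W: assumes two: "(2::'a::field) \<noteq> 0"
  shows "RB (a::'a) b c d * WW a b c d = WW a b c d * RB (-a-1) b c d"
proof (rule eq_matI)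
  fix j i assume "j < dim_row (WW a b c d * RB (-a-1) b c d)" "i < dim_col (WW a b c d * RB (-a-1) b c d)"
  hence j: "j \<le> d" and i: "i \<le> d" by auto
  have wi: "wvec a b c d i \<in> carrier_vec (d+1)" using wvec_carrier[OF two, of i d] i by simp
  have wi1: "wvec a b c d (i - 1) \<in> carrier_vec (d+1)" using wvec_carrier[OF two, of "i - 1" d] i by simp
  have "(RB a b c d * WW a b c d) $$ (j,i) = (RB a b c d *\<^sub>v col (WW a b c d) i) $ j"
    using i j by simp
  also have "\<dots> = rtheta b d i * wvec a b c d i $ j + (if 0 < i then rphi' a b c d i * wvec a b c d (i - 1) $ j else 0)"
    unfolding WW_col[OF two i] part4[OF two i] using wi wi1 j by (cases "0 < i") (auto simp del: wvec.simps)
  also have "\<dots> = row (WW a b c d) j \<bullet> col (RB (-a-1) b c d) i"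
    unfolding vec_col_RB[OF row_carrier_vec[OF _ WW_carrier(1)] i, OF le_imp_less_Suc[OF j, unfolded Suc_eq_plus1]]
    using i j by (simp add: WW_entry'[OF two] phi_neg del: wvec.simps)
  also have "\<dots> = (WW a b c d * RB (-a-1) b c d) $$ (j,i)" using i j by simp
  finally show "(RB a b c d * WW a b c d) $$ (j,i) = (WW a b c d * RB (-a-1) b c d) $$ (j,i)" .
qed auto

lemma conj_mat:
  fixes P W X Y :: "'a::field mat"
  assumes P: "P \<in> carrier_mat n n" and W: "W \<in> carrier_mat n n" and X: "X \<in> carrier_mat n n" and Y: "Y \<in> carrier_mat n n"
    and PW: "P * W = 1\<^sub>m n" and WP: "W * P = 1\<^sub>m n" and XW: "X * W = W * Y"
  shows "P * X = Y * P"
proof -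
  have "P * X = (P * X) * (W * P)" unfolding WP using P X by simp
  also have "\<dots> = P * (X * W) * P" using P X W by (simp add: assoc_mult_mat[of _ n n _ n _ n])
  also have "\<dots> = P * (W * Y) * P" unfolding XW ..
  also have "\<dots> = (P * W) * Y * P" using P Y W by (simp add: assoc_mult_mat[of _ n n _ n _ n])
  also have "\<dots> = Y * P" unfolding PW using P Y by simp
  finally show ?thesis .
qed

lemma intertw_C:
  fixes P A B A' B' :: "'a::field mat"
  assumes P: "P \<in> carrier_mat n n" and A: "A \<in> carrier_mat n n" and B: "B \<in> carrier_mat n n"
    and A': "A' \<in> carrier_mat n n" and B': "B' \<in> carrier_mat n n"
    and PA: "P * A = A' * P" and PB: "P * B = B' * P"
  shows "P * (x \<cdot>\<^sub>m 1\<^sub>m n - A - B) = (x \<cdot>\<^sub>m 1\<^sub>m n - A' - B') * P"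
proof -
  have L: "P * (x \<cdot>\<^sub>m 1\<^sub>m n - A - B) = x \<cdot>\<^sub>m P - P * A - P * B"
  proof -
    have "P * (x \<cdot>\<^sub>m 1\<^sub>m n - A - B) = P * (x \<cdot>\<^sub>m 1\<^sub>m n - A) - P * B"
      using P A B by (intro mult_minus_distrib_mat[of _ n n]) auto
    also have "P * (x \<cdot>\<^sub>m 1\<^sub>m n - A) = P * (x \<cdot>\<^sub>m 1\<^sub>m n) - P * A"
      using P A by (intro mult_minus_distrib_mat[of _ n n]) auto
    also have "P * (x \<cdot>\<^sub>m 1\<^sub>m n) = x \<cdot>\<^sub>m P" using P by (simp add: mult_smult_distrib[of _ n n _ n])
    finally show ?thesis .
  qed
  have R: "(x \<cdot>\<^sub>m 1\<^sub>m n - A' - B') * P = x \<cdot>\<^sub>m P - A' * P - B' * P"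
  proof -
    have "(x \<cdot>\<^sub>m 1\<^sub>m n - A' - B') * P = (x \<cdot>\<^sub>m 1\<^sub>m n - A') * P - B' * P"
      using P A' B' by (intro minus_mult_distrib_mat[of _ n n]) auto
    also have "(x \<cdot>\<^sub>m 1\<^sub>m n - A') * P = (x \<cdot>\<^sub>m 1\<^sub>m n) * P - A' * P"
      using P A' by (intro minus_mult_distrib_mat[of _ n n]) auto
    also have "(x \<cdot>\<^sub>m 1\<^sub>m n) * P = x \<cdot>\<^sub>m P" using P by (simp add: mult_smult_assoc_mat[of _ n n _ n])
    finally show ?thesis .
  qed
  show ?thesis unfolding L R PA PB ..
qed

lemma intertw_D:
  fixes P A B A' B' :: "'a::field mat"
  assumes P: "P \<in> carrier_mat n n" and A: "A \<in> carrier_mat n n" and B: "B \<in> carrier_mat n n"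
    and A': "A' \<in> carrier_mat n n" and B': "B' \<in> carrier_mat n n"
    and PA: "P * A = A' * P" and PB: "P * B = B' * P"
  shows "P * (y \<cdot>\<^sub>m (A * B - B * A)) = (y \<cdot>\<^sub>m (A' * B' - B' * A')) * P"
proof -
  have "P * (y \<cdot>\<^sub>m (A * B - B * A)) = y \<cdot>\<^sub>m (P * (A * B - B * A))"
    using P A B by (intro mult_smult_distrib[of _ n n]) auto
  also have "P * (A * B - B * A) = P * (A * B) - P * (B * A)"
    using P A B by (intro mult_minus_distrib_mat[of _ n n]) auto
  also have "P * (A * B) = A' * B' * P"
  proof -
    have "P * (A * B) = (P * A) * B" using P A B by (simp add: assoc_mult_mat[of _ n n _ n _ n])
    also have "\<dots> = A' * (P * B)" unfolding PA using P A' B by (simp add: assoc_mult_mat[of _ n n _ n _ n])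
    also have "\<dots> = A' * B' * P" unfolding PB using P A' B' by (simp add: assoc_mult_mat[of _ n n _ n _ n])
    finally show ?thesis .
  qed
  also have "P * (B * A) = B' * A' * P"
  proof -
    have "P * (B * A) = (P * B) * A" using P A B by (simp add: assoc_mult_mat[of _ n n _ n _ n])
    also have "\<dots> = B' * (P * A)" unfolding PB using P B' A by (simp add: assoc_mult_mat[of _ n n _ n _ n])
    also have "\<dots> = B' * A' * P" unfolding PA using P A' B' by (simp add: assoc_mult_mat[of _ n n _ n _ n])
    finally show ?thesis .
  qed
  also have "A' * B' * P - B' * A' * P = (A' * B' - B' * A') * P"
    using P A' B' by (intro minus_mult_distrib_mat[of _ n n, symmetric]) auto
  also have "y \<cdot>\<^sub>m ((A' * B' - B' * A') * P) = (y \<cdot>\<^sub>m (A' * B' - B' * A')) * P"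
    using P A' B' by (intro mult_smult_assoc_mat[of _ n n _ n, symmetric]) auto
  finally show ?thesis .
qed

theorem proposition4p3:
  fixes a b c :: "'a::field" and d :: nat
  assumes char_ne_2: "(2::'a) \<noteq> 0"
    and alg_closed: "\<forall>p :: 'a poly. degree p > 0 \<longrightarrow> (\<exists>x. poly p x = 0)"
  shows "racah_iso d a b c (-a-1) b c
     \<and> invertible_mat (mat_of_cols (d+1) (map (wvec a b c d) [0..<d+1]))
     \<and> (\<forall>i\<le>d. RA a b c d *\<^sub>v wvec a b c d i
                 = rtheta a d (d - i) \<cdot>\<^sub>v wvec a b c d i
                   + (if i < d then wvec a b c d (i+1) else 0\<^sub>v (d+1)))
     \<and> (\<forall>i\<le>d. RB a b c d *\<^sub>v wvec a b c d i
                 = rtheta b d i \<cdot>\<^sub>v wvec a b c d i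
                   + (if 0 < i then rphi' a b c d i \<cdot>\<^sub>v wvec a b c d (i-1) else 0\<^sub>v (d+1)))"
proof (intro conjI allI impI)
  note two = char_ne_2
  obtain P where P: "P \<in> carrier_mat (d+1) (d+1)" and PW: "P * WW a b c d = 1\<^sub>m (d+1)"
    and WP: "WW a b c d * P = 1\<^sub>m (d+1)" using WW_inv[OF two, of d a b c] by blast
  have PA: "P * RA a b c d = RA (-a-1) b c d * P"
    by (rule conj_mat[OF P WW_carrier(1) RA_carrier RA_carrier PW WP RA_W[OF two]])
  have PB: "P * RB a b c d = RB (-a-1) b c d * P"
    by (rule conj_mat[OF P WW_carrier(1) RB_carrier RB_carrier PW WP RB_W[OF two]])
  have PC: "P * RC a b c d = RC (-a-1) b c d * P"
    unfolding RC_def delta_neg by (rule intertw_C[OF P RA_carrier RB_carrier RA_carrier RB_carrier PA PB])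
  have PD: "P * RD a b c d = RD (-a-1) b c d * P"
    unfolding RD_def by (rule intertw_D[OF P RA_carrier RB_carrier RA_carrier RB_carrier PA PB])
  have inv: "invertible_mat (WW a b c d)"
    unfolding invertible_mat_def inverts_mat_def using PW WP P by auto
  have invP: "invertible_mat P"
    unfolding invertible_mat_def inverts_mat_def using PW WP P by auto
  show "racah_iso d a b c (-a-1) b c" unfolding racah_iso_def using P invP PA PB PC PD by blast
  show "invertible_mat (mat_of_cols (d+1) (map (wvec a b c d) [0..<d+1]))" using inv unfolding WW_def .
  show "\<And>i. i \<le> d \<Longrightarrow> RA a b c d *\<^sub>v wvec a b c d i
                 = rtheta a d (d - i) \<cdot>\<^sub>v wvec a b c d i
                   + (if i < d then wvec a b c d (i+1) else 0\<^sub>v (d+1))" by (rule part3[OF two])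
  show "\<And>i. i \<le> d \<Longrightarrow> RB a b c d *\<^sub>v wvec a b c d i
                 = rtheta b d i \<cdot>\<^sub>v wvec a b c d i
                   + (if 0 < i then rphi' a b c d i \<cdot>\<^sub>v wvec a b c d (i-1) else 0\<^sub>v (d+1))" by (rule part4[OF two])
qed

end
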